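(* Let $\mathcal{X}=\{1,\dots,n\}$, let $\pi$ be a strictly positive probability distribution on $\mathcal{X}$, let $P$ be a $\pi$-reversible transition matrix, let $G$ be the Gibbs kernel induced by a partition $\mathcal{X}=\bigsqcup_{i=1}^k\mathcal{O}_i$, and for $\alpha\in[0,1]$ let $A_\alpha=\alpha P+(1-\alpha)G$. Then $$\|A_\alpha-\Pi\|_{F,\pi}^2=2\alpha(1-\alpha)\operatorname{Tr}(\overline{P})+\alpha^2\operatorname{Tr}(P^2)+(1-\alpha)^2k-1.$$
   Context: $\pi$-reversible means $\pi(x)P(x,y)=\pi(y)P(y,x)$ for all $x,y$. The Gibbs kernel is $G(x,y)=\pi(y)/\pi(\mathcal{O}(x))$ if $y\in\mathcal{O}(x)$ and $0$ otherwise, where $\mathcal{O}(x)$ is the block containing $x$ and $\pi(\mathcal{O})=\sum_{z\in\mathcal{O}}\pi(z)$. $\overline{P}$ is the $k\times k$ projection chain $\overline{P}(i,j)=\frac{1}{\pi(\mathcal{O}_i)}\sum_{x\in\mathcal{O}_i,\,y\in\mathcal{O}_j}\pi(x)P(x,y)$. $\Pi$ is the $n\times n$ matrix with every row equal to $\pi$. For $n\times n$ real matrices, $\|M\|_{F,\pi}^2=\operatorname{Tr}(M^*M)$, where $M^*$ is the adjoint of $M$ in $\ell^2(\pi)$, i.e. $M^*(x,y)=\pi(y)M(y,x)/\pi(x)$. *)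

theory Defs
  imports Complex_Main
begin

text \<open>State space: a finite type 'a (playing the role of {1,...,n}).
  Matrices are functions 'a \<Rightarrow> 'a \<Rightarrow> real.\<close>

definition mat_mult :: "('a::finite \<Rightarrow> 'a \<Rightarrow> real) \<Rightarrow> ('a \<Rightarrow> 'a \<Rightarrow> real) \<Rightarrow> 'a \<Rightarrow> 'a \<Rightarrow> real" where
  "mat_mult A B = (\<lambda>x z. \<Sum>y\<in>UNIV. A x y * B y z)"

definition mat_trace :: "('a::finite \<Rightarrow> 'a \<Rightarrow> real) \<Rightarrow> real" where
  "mat_trace M = (\<Sum>x\<in>UNIV. M x x)"

definition prob_dist :: "('a::finite \<Rightarrow> real) \<Rightarrow> bool" where
  "prob_dist \<pi> \<longleftrightarrow> (\<forall>x. \<pi> x > 0) \<and> (\<Sum>x\<in>UNIV. \<pi> x) = 1"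

definition transition_matrix :: "('a::finite \<Rightarrow> 'a \<Rightarrow> real) \<Rightarrow> bool" where
  "transition_matrix P \<longleftrightarrow> (\<forall>x y. P x y \<ge> 0) \<and> (\<forall>x. (\<Sum>y\<in>UNIV. P x y) = 1)"

definition reversible :: "('a \<Rightarrow> real) \<Rightarrow> ('a \<Rightarrow> 'a \<Rightarrow> real) \<Rightarrow> bool" where
  "reversible \<pi> P \<longleftrightarrow> (\<forall>x y. \<pi> x * P x y = \<pi> y * P y x)"

definition is_partition :: "(nat \<Rightarrow> 'a set) \<Rightarrow> nat \<Rightarrow> bool" where
  "is_partition Bl k \<longleftrightarrow> (\<forall>i<k. Bl i \<noteq> {}) \<and>
     (\<forall>i<k. \<forall>j<k. i \<noteq> j \<longrightarrow> Bl i \<inter> Bl j = {}) \<and> (\<Union>i<k. Bl i) = UNIV"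

definition block :: "(nat \<Rightarrow> 'a set) \<Rightarrow> nat \<Rightarrow> 'a \<Rightarrow> 'a set" where
  "block Bl k x = Bl (THE i. i < k \<and> x \<in> Bl i)"

definition pi_mass :: "('a \<Rightarrow> real) \<Rightarrow> 'a set \<Rightarrow> real" where
  "pi_mass \<pi> S = (\<Sum>z\<in>S. \<pi> z)"

definition gibbs_kernel :: "('a \<Rightarrow> real) \<Rightarrow> (nat \<Rightarrow> 'a set) \<Rightarrow> nat \<Rightarrow> 'a \<Rightarrow> 'a \<Rightarrow> real" where
  "gibbs_kernel \<pi> Bl k x y =
     (if y \<in> block Bl k x then \<pi> y / pi_mass \<pi> (block Bl k x) else 0)"

definition proj_chain :: "('a \<Rightarrow> real) \<Rightarrow> ('a \<Rightarrow> 'a \<Rightarrow> real) \<Rightarrow> (nat \<Rightarrow> 'a set) \<Rightarrow> nat \<Rightarrow> nat \<Rightarrow> real" where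
  "proj_chain \<pi> P Bl i j =
     (1 / pi_mass \<pi> (Bl i)) * (\<Sum>x\<in>Bl i. \<Sum>y\<in>Bl j. \<pi> x * P x y)"

definition Pi_mat :: "('a \<Rightarrow> real) \<Rightarrow> 'a \<Rightarrow> 'a \<Rightarrow> real" where
  "Pi_mat \<pi> = (\<lambda>x y. \<pi> y)"

text \<open>Adjoint in l^2(pi).\<close>
definition adjoint :: "('a \<Rightarrow> real) \<Rightarrow> ('a \<Rightarrow> 'a \<Rightarrow> real) \<Rightarrow> 'a \<Rightarrow> 'a \<Rightarrow> real" where
  "adjoint \<pi> M = (\<lambda>x y. \<pi> y * M y x / \<pi> x)"

definition frob_sq :: "('a::finite \<Rightarrow> real) \<Rightarrow> ('a \<Rightarrow> 'a \<Rightarrow> real) \<Rightarrow> real" where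
  "frob_sq \<pi> M = mat_trace (mat_mult (adjoint \<pi> M) M)"

end

theory Submission
  imports Defs
begin

lemma block_eq:
  assumes "is_partition Bl k" "i < k" "y \<in> Bl i"
  shows "block Bl k y = Bl i"
proof -
  have "(THE j. j < k \<and> y \<in> Bl j) = i"
    using assms unfolding is_partition_def by (intro the_equality) auto
  thus ?thesis unfolding block_def by simp
qed

lemma block_ex:
  assumes "is_partition Bl k"
  shows "\<exists>i<k. y \<in> Bl i \<and> block Bl k y = Bl i"
proof -
  have "y \<in> (\<Union>i<k. Bl i)" using assms unfolding is_partition_def by auto
  then obtain i where "i < k" "y \<in> Bl i" by auto
  thus ?thesis using block_eq[OF assms] by blast
qed

lemma sum_part:
  fixes f :: "'a::finite \<Rightarrow> real"
  assumes "is_partition Bl k"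
  shows "(\<Sum>y\<in>UNIV. f y) = (\<Sum>i<k. \<Sum>y\<in>Bl i. f y)"
proof -
  have "UNIV = (\<Union>i\<in>{..<k}. Bl i)" using assms unfolding is_partition_def by auto
  hence "(\<Sum>y\<in>UNIV. f y) = sum f (\<Union>i\<in>{..<k}. Bl i)" by simp
  also have "\<dots> = (\<Sum>i<k. sum f (Bl i))"
    using assms unfolding is_partition_def by (intro sum.UNION_disjoint) auto
  finally show ?thesis .
qed

lemma sum_if_in:
  fixes g :: "'a::finite \<Rightarrow> real"
  shows "(\<Sum>x\<in>UNIV. if x \<in> B then g x else 0) = sum g B"
  by (simp add: sum.If_cases)

theorem proposition4p2:
  fixes \<pi> :: "'a::finite \<Rightarrow> real" and P :: "'a \<Rightarrow> 'a \<Rightarrow> real"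
    and Bl :: "nat \<Rightarrow> 'a set" and k :: nat and \<alpha> :: real
  assumes "prob_dist \<pi>"
    and "transition_matrix P"
    and "reversible \<pi> P"
    and "is_partition Bl k"
    and "0 \<le> \<alpha>" and "\<alpha> \<le> 1"
  shows "frob_sq \<pi> (\<lambda>x y. \<alpha> * P x y + (1 - \<alpha>) * gibbs_kernel \<pi> Bl k x y - Pi_mat \<pi> x y)
    = 2 * \<alpha> * (1 - \<alpha>) * (\<Sum>i<k. proj_chain \<pi> P Bl i i)
      + \<alpha>^2 * mat_trace (mat_mult P P) + (1 - \<alpha>)^2 * real k - 1"
proof -
  note part = assms(4)
  have pos: "\<And>x. \<pi> x > 0" and s1: "(\<Sum>x\<in>UNIV. \<pi> x) = 1"
    using assms(1) unfolding prob_dist_def by auto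
  have rows: "\<And>x. (\<Sum>y\<in>UNIV. P x y) = 1" using assms(2) unfolding transition_matrix_def by auto
  have rev: "\<And>x y. \<pi> x * P x y = \<pi> y * P y x" using assms(3) unfolding reversible_def by auto
  define G where "G = gibbs_kernel \<pi> Bl k"
  define m where "m = (\<lambda>i. pi_mass \<pi> (Bl i))"
  have mpos: "m i > 0" if "i < k" for i
  proof -
    have ne: "Bl i \<noteq> {}" using part that unfolding is_partition_def by auto
    show ?thesis unfolding m_def pi_mass_def
      by (rule sum_pos) (use ne pos in auto)
  qed
  have Gblk: "G y x = (if x \<in> Bl i then \<pi> x / m i else 0)" if "i < k" "y \<in> Bl i" for i y x
    unfolding G_def gibbs_kernel_def m_def using block_eq[OF part that] by simp
  have pw: "\<pi> y * (\<alpha> * P y x + (1 - \<alpha>) * G y x - Pi_mat \<pi> y x) / \<pi> x *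
             (\<alpha> * P y x + (1 - \<alpha>) * G y x - Pi_mat \<pi> y x)
     = \<alpha>^2 * (\<pi> y / \<pi> x * P y x * P y x) + (1-\<alpha>)^2 * (\<pi> y / \<pi> x * G y x * G y x)
       + \<pi> y * \<pi> x + 2 * \<alpha> * (1-\<alpha>) * (\<pi> y / \<pi> x * P y x * G y x)
       - 2 * \<alpha> * (\<pi> y * P y x) - 2 * (1 - \<alpha>) * (\<pi> y * G y x)" for x y
  proof -
    have "\<pi> x \<noteq> 0" using pos[of x] by simp
    thus ?thesis unfolding Pi_mat_def by (simp add: field_simps power2_eq_square)
  qed
  have "frob_sq \<pi> (\<lambda>x y. \<alpha> * P x y + (1 - \<alpha>) * G x y - Pi_mat \<pi> x y)
     = (\<Sum>x\<in>UNIV. \<Sum>y\<in>UNIV. \<pi> y * (\<alpha> * P y x + (1 - \<alpha>) * G y x - Pi_mat \<pi> y x) / \<pi> x *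
             (\<alpha> * P y x + (1 - \<alpha>) * G y x - Pi_mat \<pi> y x))"
    unfolding frob_sq_def mat_trace_def mat_mult_def adjoint_def by simp
  also have "\<dots> = (\<Sum>y\<in>UNIV. \<Sum>x\<in>UNIV. \<pi> y * (\<alpha> * P y x + (1 - \<alpha>) * G y x - Pi_mat \<pi> y x) / \<pi> x *
             (\<alpha> * P y x + (1 - \<alpha>) * G y x - Pi_mat \<pi> y x))"
    by (rule sum.swap)
  also have "\<dots> = \<alpha>^2 * (\<Sum>y\<in>UNIV. \<Sum>x\<in>UNIV. \<pi> y / \<pi> x * P y x * P y x)
       + (1-\<alpha>)^2 * (\<Sum>y\<in>UNIV. \<Sum>x\<in>UNIV. \<pi> y / \<pi> x * G y x * G y x)
       + (\<Sum>y\<in>UNIV. \<Sum>x\<in>UNIV. \<pi> y * \<pi> x)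
       + 2 * \<alpha> * (1-\<alpha>) * (\<Sum>y\<in>UNIV. \<Sum>x\<in>UNIV. \<pi> y / \<pi> x * P y x * G y x)
       - 2 * \<alpha> * (\<Sum>y\<in>UNIV. \<Sum>x\<in>UNIV. \<pi> y * P y x)
       - 2 * (1 - \<alpha>) * (\<Sum>y\<in>UNIV. \<Sum>x\<in>UNIV. \<pi> y * G y x)"
    unfolding pw by (simp add: sum.distrib sum_subtractf sum_distrib_left)
  also have "(\<Sum>y\<in>UNIV. \<Sum>x\<in>UNIV. \<pi> y / \<pi> x * P y x * P y x) = mat_trace (mat_mult P P)"
  proof -
    have "\<pi> y / \<pi> x * P y x * P y x = P x y * P y x" for x y
    proof -
      have "\<pi> x \<noteq> 0" using pos[of x] by simp
      thus ?thesis using rev[of y x] by (simp add: field_simps)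
    qed
    hence "(\<Sum>y\<in>UNIV. \<Sum>x\<in>UNIV. \<pi> y / \<pi> x * P y x * P y x) = (\<Sum>y\<in>UNIV. \<Sum>x\<in>UNIV. P x y * P y x)"
      by simp
    also have "\<dots> = mat_trace (mat_mult P P)"
      unfolding mat_trace_def mat_mult_def by (rule sum.swap)
    finally show ?thesis .
  qed
  also have "(\<Sum>y\<in>UNIV. \<Sum>x\<in>UNIV. \<pi> y / \<pi> x * G y x * G y x) = real k"
  proof -
    have "(\<Sum>x\<in>UNIV. \<pi> y / \<pi> x * G y x * G y x) = 1 / m i * \<pi> y" if "i < k" "y \<in> Bl i" for i y
    proof -
      have "(\<Sum>x\<in>UNIV. \<pi> y / \<pi> x * G y x * G y x)
          = (\<Sum>x\<in>UNIV. if x \<in> Bl i then \<pi> y / \<pi> x * (\<pi> x / m i) * (\<pi> x / m i) else 0)"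
        using Gblk[OF that] by (intro sum.cong) auto
      also have "\<dots> = (\<Sum>x\<in>Bl i. \<pi> y / (m i * m i) * \<pi> x)"
        unfolding sum_if_in
      proof (intro sum.cong refl)
        fix x have "\<pi> x \<noteq> 0" using pos[of x] by simp
        thus "\<pi> y / \<pi> x * (\<pi> x / m i) * (\<pi> x / m i) = \<pi> y / (m i * m i) * \<pi> x"
          by (simp add: field_simps power2_eq_square)
      qed
      also have "\<dots> = \<pi> y / (m i * m i) * m i"
        unfolding m_def pi_mass_def by (simp add: sum_distrib_left)
      also have "\<dots> = 1 / m i * \<pi> y" using mpos[OF that(1)] by (simp add: field_simps)
      finally show ?thesis .
    qed
    hence "(\<Sum>y\<in>UNIV. \<Sum>x\<in>UNIV. \<pi> y / \<pi> x * G y x * G y x) = (\<Sum>i<k. \<Sum>y\<in>Bl i. 1 / m i * \<pi> y)"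
      unfolding sum_part[OF part, of "\<lambda>y. \<Sum>x\<in>UNIV. \<pi> y / \<pi> x * G y x * G y x"]
      by (intro sum.cong refl) auto
    also have "\<dots> = (\<Sum>i<k. 1)"
    proof (intro sum.cong refl)
      fix i assume "i \<in> {..<k}"
      hence "m i > 0" using mpos by auto
      thus "(\<Sum>y\<in>Bl i. 1 / m i * \<pi> y) = 1"
        unfolding sum_distrib_left[symmetric] by (simp add: m_def pi_mass_def)
    qed
    finally show ?thesis by simp
  qed
  also have "(\<Sum>y\<in>UNIV. \<Sum>x\<in>UNIV. \<pi> y * \<pi> x) = 1"
    by (simp add: sum_distrib_left[symmetric] s1)
  also have "(\<Sum>y\<in>UNIV. \<Sum>x\<in>UNIV. \<pi> y / \<pi> x * P y x * G y x) = (\<Sum>i<k. proj_chain \<pi> P Bl i i)"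
  proof -
    have "(\<Sum>x\<in>UNIV. \<pi> y / \<pi> x * P y x * G y x) = 1 / m i * (\<Sum>x\<in>Bl i. \<pi> y * P y x)"
      if "i < k" "y \<in> Bl i" for i y
    proof -
      have "(\<Sum>x\<in>UNIV. \<pi> y / \<pi> x * P y x * G y x)
          = (\<Sum>x\<in>UNIV. if x \<in> Bl i then \<pi> y / \<pi> x * P y x * (\<pi> x / m i) else 0)"
        using Gblk[OF that] by (intro sum.cong) auto
      also have "\<dots> = (\<Sum>x\<in>Bl i. 1 / m i * (\<pi> y * P y x))"
        unfolding sum_if_in
      proof (intro sum.cong refl)
        fix x have "\<pi> x \<noteq> 0" using pos[of x] by simp
        thus "\<pi> y / \<pi> x * P y x * (\<pi> x / m i) = 1 / m i * (\<pi> y * P y x)"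
          by (simp add: field_simps)
      qed
      finally show ?thesis by (simp add: sum_distrib_left)
    qed
    hence "(\<Sum>y\<in>UNIV. \<Sum>x\<in>UNIV. \<pi> y / \<pi> x * P y x * G y x)
        = (\<Sum>i<k. \<Sum>y\<in>Bl i. 1 / m i * (\<Sum>x\<in>Bl i. \<pi> y * P y x))"
      unfolding sum_part[OF part, of "\<lambda>y. \<Sum>x\<in>UNIV. \<pi> y / \<pi> x * P y x * G y x"]
      by (intro sum.cong refl) auto
    also have "\<dots> = (\<Sum>i<k. proj_chain \<pi> P Bl i i)"
      unfolding proj_chain_def m_def by (simp add: sum_distrib_left)
    finally show ?thesis .
  qed
  also have "(\<Sum>y\<in>UNIV. \<Sum>x\<in>UNIV. \<pi> y * P y x) = 1"
    by (simp add: sum_distrib_left[symmetric] rows s1)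
  also have "(\<Sum>y\<in>UNIV. \<Sum>x\<in>UNIV. \<pi> y * G y x) = 1"
  proof -
    have "(\<Sum>x\<in>UNIV. G y x) = 1" for y
    proof -
      obtain i where i: "i < k" "y \<in> Bl i" using block_ex[OF part] by blast
      have "(\<Sum>x\<in>UNIV. G y x) = (\<Sum>x\<in>UNIV. if x \<in> Bl i then \<pi> x / m i else 0)"
        using Gblk[OF i] by simp
      also have "\<dots> = (\<Sum>x\<in>Bl i. \<pi> x) / m i" unfolding sum_if_in by (simp add: sum_divide_distrib)
      also have "\<dots> = 1" using mpos[OF i(1)] by (simp add: m_def pi_mass_def)
      finally show ?thesis .
    qed
    thus ?thesis by (simp add: sum_distrib_left[symmetric] s1)
  qed
  finally show ?thesis unfolding G_def by (simp add: algebra_simps)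
qed

end
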